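(* Let $k$ be a field of characteristic $0$ and let $V\subset\mathbb{P}^n_k$ be a geometrically integral complete intersection of two quadrics $Q_1=Q_2=0$ which is not a cone. If the homogeneous polynomial $P(\lambda,\mu)=\det(\lambda Q_1+\mu Q_2)$ vanishes identically, then $V$ has infinitely many singular $k$-rational points.
   Context: Here $\det(\lambda Q_1+\mu Q_2)$ is the determinant of the symmetric matrix of the quadratic form $\lambda Q_1+\mu Q_2$ in $n+1$ variables. *)

theory Defs
  imports "HOL-Analysis.Analysis" "HOL-Library.Poly_Mapping"
          "HOL-Computational_Algebra.Polynomial"
begin

text \<open>Quadratic forms in the n+1 homogeneous coordinates of P^n are given by
  symmetric (n+1)x(n+1) matrices; the coordinates are indexed by a finite type 'n
  with CARD('n) = n+1.\<close>

definition qf_val :: "'a::comm_ring_1^'n^'n \<Rightarrow> 'a^'n \<Rightarrow> 'a" where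
  "qf_val A x = (\<Sum>i\<in>UNIV. \<Sum>j\<in>UNIV. A$i$j * x$i * x$j)"

type_synonym ('n, 'a) mpoly = "('n \<Rightarrow>\<^sub>0 nat) \<Rightarrow>\<^sub>0 'a"

definition mvar :: "'n \<Rightarrow> ('n, 'a::comm_ring_1) mpoly" where
  "mvar i = Poly_Mapping.single (Poly_Mapping.single i 1) 1"

definition mconst :: "'a \<Rightarrow> ('n, 'a::comm_ring_1) mpoly" where
  "mconst c = Poly_Mapping.single 0 c"

definition qf_poly :: "'a::comm_ring_1^'n::finite^'n \<Rightarrow> ('n, 'a) mpoly" where
  "qf_poly A = (\<Sum>i\<in>UNIV. \<Sum>j\<in>UNIV. mconst (A$i$j) * mvar i * mvar j)"

definition in_ideal2 :: "'r::comm_ring_1 \<Rightarrow> 'r \<Rightarrow> 'r \<Rightarrow> bool" where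
  "in_ideal2 f g p \<longleftrightarrow> (\<exists>a b. p = a * f + b * g)"

definition prime_ideal2 :: "'r::comm_ring_1 \<Rightarrow> 'r \<Rightarrow> bool" where
  "prime_ideal2 f g \<longleftrightarrow> \<not> in_ideal2 f g 1 \<and>
     (\<forall>p q. in_ideal2 f g (p * q) \<longrightarrow> in_ideal2 f g p \<or> in_ideal2 f g q)"

text \<open>(f, g) is a regular sequence: f is nonzero and g is a non-zero-divisor
  modulo f, with (f, g) a proper ideal (complete intersection of codimension 2).\<close>
definition regular_seq2 :: "'r::comm_ring_1 \<Rightarrow> 'r \<Rightarrow> bool" where
  "regular_seq2 f g \<longleftrightarrow> f \<noteq> 0 \<and> \<not> in_ideal2 f g 1 \<and>
     (\<forall>p. (\<exists>a. g * p = a * f) \<longrightarrow> (\<exists>a. p = a * f))"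

text \<open>Points of the affine cone over V = {Q1 = Q2 = 0} with coordinates in a ring.\<close>
definition cone_pts :: "'a::comm_ring_1^'n^'n \<Rightarrow> 'a^'n^'n \<Rightarrow> ('a^'n) set" where
  "cone_pts A1 A2 = {x. qf_val A1 x = 0 \<and> qf_val A2 x = 0}"

definition is_cone :: "'a::field^'n^'n \<Rightarrow> 'a^'n^'n \<Rightarrow> bool" where
  "is_cone A1 A2 \<longleftrightarrow> (\<exists>p. p \<noteq> 0 \<and>
     (\<forall>x\<in>cone_pts A1 A2. \<forall>s t. s *s p + t *s x \<in> cone_pts A1 A2))"

text \<open>Singular points of the complete intersection (Jacobian criterion): the
  gradients (A_i + A_i^T) x of the two forms are linearly dependent.\<close>
definition sing_pts :: "'a::field^'n^'n \<Rightarrow> 'a^'n^'n \<Rightarrow> ('a^'n) set" where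
  "sing_pts A1 A2 = {x. x \<noteq> 0 \<and> x \<in> cone_pts A1 A2 \<and>
     (\<exists>a b. (a, b) \<noteq> (0, 0) \<and>
        a *s ((A1 + transpose A1) *v x) + b *s ((A2 + transpose A2) *v x) = 0)}"

text \<open>The point of P^n represented by a nonzero vector.\<close>
definition proj_pt :: "'a::field^'n \<Rightarrow> ('a^'n) set" where
  "proj_pt x = {c *s x | c. c \<noteq> 0}"

definition map_mat :: "('a \<Rightarrow> 'b) \<Rightarrow> 'a^'n^'m \<Rightarrow> 'b^'n^'m" where
  "map_mat f A = (\<chi> i j. f (A$i$j))"

end

theory Submission
  imports Defs
begin

definition bil :: "'a::comm_ring_1^'n^'n \<Rightarrow> 'a^'n \<Rightarrow> 'a^'n \<Rightarrow> 'a" where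
  "bil A x y = (\<Sum>i\<in>UNIV. \<Sum>j\<in>UNIV. A$i$j * x$i * y$j)"

lemma qf_bil: "qf_val A x = bil A x x"
  by (simp add: qf_val_def bil_def)

lemma bil_mv: "bil A x y = (\<Sum>i\<in>UNIV. x$i * (A *v y)$i)"
  by (simp add: bil_def matrix_vector_mult_def sum_distrib_left mult_ac)

lemma bil_sym: assumes "transpose A = A" shows "bil A x y = bil A y x"
proof -
  have s: "A$i$j = A$j$i" for i j
    using assms by (metis transpose_def vec_lambda_beta)
  have "bil A x y = (\<Sum>j\<in>UNIV. \<Sum>i\<in>UNIV. A$i$j * x$i * y$j)"
    unfolding bil_def by (rule sum.swap)
  also have "\<dots> = bil A y x" unfolding bil_def
    by (intro sum.cong refl) (simp add: s mult_ac)
  finally show ?thesis .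
qed

lemma bil_add2: "bil A x (y + z) = bil A x y + bil A x z"
  by (simp add: bil_def algebra_simps sum.distrib)

lemma bil_smult2: "bil A x (c *s y) = c * bil A x y"
  by (simp add: bil_def sum_distrib_left mult_ac)

lemma bil_zero2: "bil A x 0 = 0"
  by (simp add: bil_def)

lemma bil_sum2: "bil A x (\<Sum>v\<in>S. f v) = (\<Sum>v\<in>S. bil A x (f v))"
proof (induction S rule: infinite_finite_induct)
  case (infinite A) then show ?case by (simp add: bil_zero2)
next
  case empty then show ?case by (simp add: bil_zero2)
next
  case (insert v F) then show ?case by (simp add: bil_add2)
qed

lemma bil_lin: "bil A (a *s p + b *s y) (a *s p + b *s y)
   = a * a * bil A p p + a * b * bil A p y + b * a * bil A y p + b * b * bil A y y"
  by (simp add: bil_def algebra_simps sum.distrib sum_distrib_left)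

lemma ker_of_det0:
  fixes M :: "'a::field^'n^'n"
  assumes "det M = 0" shows "\<exists>x. x \<noteq> 0 \<and> M *v x = 0"
proof -
  have "\<not> invertible M" using assms invertible_det_nz by blast
  then have "\<not> (\<exists>B::'a^'n^'n. B ** M = mat 1)" using invertible_left_inverse by blast
  then show ?thesis using matrix_left_invertible_ker by blast
qed

lemma pencil_mv:
  "(\<chi> i j. 1 * A1$i$j + t * A2$i$j) *v x = A1 *v x + t *s (A2 *v x)"
  by (simp add: vec_eq_iff matrix_vector_mult_def sum.distrib sum_distrib_left algebra_simps)

lemma ker_bil:
  assumes "A1 *v x + t *s (A2 *v x) = 0"
  shows "bil A1 y x + t * bil A2 y x = 0"
proof -
  have c: "(A1 *v x)$i + t * (A2 *v x)$i = 0" for i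
    using assms by (metis vector_add_component vector_smult_component zero_index)
  have "bil A1 y x + t * bil A2 y x = (\<Sum>i\<in>UNIV. y$i * ((A1 *v x)$i + t * (A2 *v x)$i))"
    by (simp add: bil_mv sum_distrib_left sum.distrib algebra_simps)
  also have "\<dots> = 0" by (simp add: c)
  finally show ?thesis .
qed

lemma emb_sum:
  assumes "\<And>a b. emb (a + b) = emb a + emb b" and z: "emb 0 = 0"
  shows "emb (sum f S) = (\<Sum>x\<in>S. emb (f x))"
  by (induction S rule: infinite_finite_induct) (auto simp: assms)

lemma qf_cone_line:
  assumes "transpose B = B" "B *v p = 0" "qf_val B y = 0"
  shows "qf_val B (a *s p + b *s y) = 0"
proof -
  have 1: "bil B z p = 0" for z using assms(2) by (simp add: bil_mv)
  have 2: "bil B p y = 0" using bil_sym[OF assms(1)] 1 by metis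
  show ?thesis using assms(3) by (simp add: qf_bil bil_lin 1 2)
qed

lemma cone_of_common_ker:
  fixes A1 A2 :: "'k::field^'n^'n" and emb :: "'k \<Rightarrow> 'K::field"
  assumes sym1: "transpose A1 = A1" and sym2: "transpose A2 = A2"
    and add: "\<And>a b. emb (a + b) = emb a + emb b" and mul: "\<And>a b. emb (a * b) = emb a * emb b"
    and inj: "inj emb" and x: "x \<noteq> 0" "A1 *v x = 0" "A2 *v x = 0"
  shows "is_cone (map_mat emb A1) (map_mat emb A2)"
proof -
  have z: "emb 0 = 0"
  proof -
    have "emb 0 + emb 0 = emb 0 + 0" using add[of 0 0] by simp
    then show ?thesis by (rule add_left_imp_eq)
  qed
  define p where "p = (\<chi> i. emb (x$i))"
  have p0: "p \<noteq> 0"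
  proof
    assume "p = 0"
    then have "emb (x$i) = emb 0" for i using z by (metis p_def vec_lambda_beta zero_index)
    then have "x$i = 0" for i using inj by (meson injD)
    then show False using x(1) by (simp add: vec_eq_iff)
  qed
  have symm: "transpose (map_mat emb A) = map_mat emb A" if "transpose A = A" for A :: "'k^'n^'n"
  proof -
    have "A$i$j = A$j$i" for i j using that by (metis transpose_def vec_lambda_beta)
    then show ?thesis by (simp add: vec_eq_iff transpose_def map_mat_def)
  qed
  have kerm: "map_mat emb A *v p = 0" if "A *v x = 0" for A :: "'k^'n^'n"
  proof -
    have "(map_mat emb A *v p)$i = emb ((A *v x)$i)" for i
      by (simp add: matrix_vector_mult_def map_mat_def p_def emb_sum[OF add z] mul)
    then show ?thesis using that z by (simp add: vec_eq_iff)
  qed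
  show ?thesis unfolding is_cone_def cone_pts_def
    using p0 qf_cone_line[OF symm[OF sym1] kerm[OF x(2)]] qf_cone_line[OF symm[OF sym2] kerm[OF x(3)]]
    by blast
qed

lemma mv_smult:
  fixes A :: "'a::comm_ring_1^'n^'m"
  shows "A *v (c *s x) = c *s (A *v x)"
  by (simp add: vec_eq_iff matrix_vector_mult_def sum_distrib_left mult_ac)

lemma comp0: "u + s *s v = 0 \<Longrightarrow> u$i + s * v$i = (0::'a::comm_ring_1)"
  by (drule arg_cong[where f="\<lambda>w. w$i"]) simp

lemma mv_double: "(A + A) *v x = A *v x + A *v x"
  by (simp add: vec_eq_iff matrix_vector_mult_def sum.distrib distrib_right)

theorem lemma5p9:
  fixes A1 A2 :: "'k::field_char_0^'n::finite^'n"
    and emb :: "'k \<Rightarrow> 'K::alg_closed_field"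
  assumes sym1: "transpose A1 = A1" and sym2: "transpose A2 = A2"
    and emb_hom: "\<And>a b. emb (a + b) = emb a + emb b" "\<And>a b. emb (a * b) = emb a * emb b"
      "emb 1 = 1"
    and emb_inj: "inj emb"
    and ci: "regular_seq2 (qf_poly A1) (qf_poly A2)"
    and geom_int: "prime_ideal2 (qf_poly (map_mat emb A1)) (qf_poly (map_mat emb A2))"
    and not_cone: "\<not> is_cone (map_mat emb A1) (map_mat emb A2)"
    and det_zero: "\<forall>l m. det (\<chi> i j. l * A1$i$j + m * A2$i$j) = 0"
  shows "infinite (proj_pt ` sing_pts A1 A2)"
proof -
  define Kt where "Kt t x \<longleftrightarrow> x \<noteq> 0 \<and> A1 *v x + t *s (A2 *v x) = 0" for t and x :: "'k^'n"
  have ex: "\<exists>x. Kt t x" for t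
  proof -
    have "det (\<chi> i j. 1 * A1$i$j + t * A2$i$j) = 0" using det_zero[rule_format, of 1 t] .
    then obtain x where "x \<noteq> 0" "(\<chi> i j. 1 * A1$i$j + t * A2$i$j) *v x = 0"
      using ker_of_det0 by blast
    then show ?thesis unfolding Kt_def pencil_mv by blast
  qed
  define X where "X t = (SOME x. Kt t x)" for t
  have X: "Kt t (X t)" for t unfolding X_def using ex[of t] by (rule someI_ex)
  have nocommon: False if "x \<noteq> 0" "A1 *v x = 0" "A2 *v x = 0" for x
    using cone_of_common_ker[OF sym1 sym2 emb_hom(1,2) emb_inj that] not_cone by blast
  have two: "s = t" if "Kt s x" "Kt t x" for s t x
  proof (rule ccontr)
    assume st: "s \<noteq> t"
    have c: "(A1 *v x)$i + s * (A2 *v x)$i = 0" "(A1 *v x)$i + t * (A2 *v x)$i = 0" for i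
      using that unfolding Kt_def by (auto intro: comp0)
    have "(A2 *v x)$i = 0" for i
    proof -
      have "(s - t) * (A2 *v x)$i = ((A1 *v x)$i + s * (A2 *v x)$i) - ((A1 *v x)$i + t * (A2 *v x)$i)"
        by (simp add: algebra_simps)
      then have "(s - t) * (A2 *v x)$i = 0" using c[of i] by simp
      then show ?thesis using st by simp
    qed
    moreover have "(A1 *v x)$i = 0" for i using c[of i] calculation by simp
    ultimately show False using nocommon[of x] that(1) unfolding Kt_def by (simp add: vec_eq_iff)
  qed
  have scal: "Kt t (c *s x)" if "Kt t x" "c \<noteq> 0" for t c x
  proof -
    have "A1 *v (c *s x) + t *s (A2 *v (c *s x)) = c *s (A1 *v x + t *s (A2 *v x))"
      by (simp add: mv_smult vec_eq_iff algebra_simps)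
    then show ?thesis using that unfolding Kt_def by simp
  qed
  have orth: "bil A2 x y = 0" if "Kt s x" "Kt t y" "s \<noteq> t" for s t x y
  proof -
    have 1: "bil A1 x y + t * bil A2 x y = 0" using ker_bil that(2) unfolding Kt_def by blast
    have 2: "bil A1 y x + s * bil A2 y x = 0" using ker_bil that(1) unfolding Kt_def by blast
    have "(t - s) * bil A2 x y = (bil A1 x y + t * bil A2 x y) - (bil A1 y x + s * bil A2 y x)"
      using bil_sym[OF sym1, of x y] bil_sym[OF sym2, of x y] by (simp add: algebra_simps)
    then have "(t - s) * bil A2 x y = 0" using 1 2 by simp
    then show ?thesis using that(3) by simp
  qed
  define G where "G = {t. qf_val A1 (X t) = 0 \<and> qf_val A2 (X t) = 0}"
  have injX: "inj X" using two X by (metis injI)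
  have finc: "finite (- G)"
  proof (rule ccontr)
    assume "infinite (- G)"
    then obtain B where B: "B \<subseteq> - G" "finite B" "card B = CARD('n) + 1"
      using infinite_arbitrarily_large by metis
    define S where "S = X ` B"
    have fS: "finite S" using B(2) S_def by simp
    have cS: "card S = CARD('n) + 1" using B(3) injX S_def by (simp add: card_image inj_on_subset)
    have "vec.dependent S"
      using vec.dependent_biggerset_general[of S] dim_subset_UNIV_cart_gen[of S] cS by linarith
    then obtain u v0 where u: "v0 \<in> S" "u v0 \<noteq> 0" "(\<Sum>v\<in>S. u v *s v) = 0"
      using vec.dependent_finite[OF fS] by blast
    obtain t0 where t0: "t0 \<in> B" "v0 = X t0" using u(1) S_def by blast
    have z: "bil A2 v0 v = 0" if vS: "v \<in> S - {v0}" for v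
    proof -
      obtain t where "t \<in> B" "v = X t" using vS S_def by blast
      then have "t \<noteq> t0" using vS t0 by blast
      then show ?thesis using orth[OF X[of t0] X[of t]] t0 \<open>v = X t\<close> by simp
    qed
    have "0 = bil A2 v0 (\<Sum>v\<in>S. u v *s v)" using u(3) by (simp add: bil_zero2)
    also have "\<dots> = (\<Sum>v\<in>S. u v * bil A2 v0 v)" by (simp add: bil_sum2 bil_smult2)
    also have "\<dots> = u v0 * bil A2 v0 v0 + (\<Sum>v\<in>S - {v0}. u v * bil A2 v0 v)"
      using sum.remove[OF fS u(1)] by blast
    also have "\<dots> = u v0 * bil A2 v0 v0" using z by simp
    finally have q2: "bil A2 v0 v0 = 0" using u(2) by simp
    have "bil A1 v0 v0 + t0 * bil A2 v0 v0 = 0" using ker_bil X[of t0] t0(2) unfolding Kt_def by blast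
    then have q1: "bil A1 v0 v0 = 0" using q2 by simp
    have "t0 \<in> G" using q1 q2 t0(2) unfolding G_def by (simp add: qf_bil)
    then show False using t0(1) B(1) by blast
  qed
  have infG: "infinite G"
  proof
    assume "finite G"
    then have "finite (G \<union> - G)" using finc by simp
    then show False using infinite_UNIV_char_0[where 'a='k] by simp
  qed
  have sing: "X t \<in> sing_pts A1 A2" if "t \<in> G" for t
  proof -
    have c: "(A1 *v X t)$i + t * (A2 *v X t)$i = 0" for i
      using X[of t] unfolding Kt_def by (auto intro: comp0)
    have "1 *s ((A1 + transpose A1) *v X t) + t *s ((A2 + transpose A2) *v X t) = 0"
    proof -
      have "(A1 *v X t)$i + (A1 *v X t)$i + t * ((A2 *v X t)$i + (A2 *v X t)$i) = 0" for i
      proof -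
        have "(A1 *v X t)$i + (A1 *v X t)$i + t * ((A2 *v X t)$i + (A2 *v X t)$i)
           = 2 * ((A1 *v X t)$i + t * (A2 *v X t)$i)" by (simp add: algebra_simps)
        then show ?thesis using c[of i] by simp
      qed
      then show ?thesis unfolding sym1 sym2 mv_double by (simp add: vec_eq_iff)
    qed
    moreover have "X t \<noteq> 0" using X[of t] unfolding Kt_def by simp
    moreover have "(1::'k, t) \<noteq> (0, 0)" by simp
    ultimately show ?thesis using that unfolding sing_pts_def cone_pts_def G_def
      by blast
  qed
  have injp: "inj_on (proj_pt \<circ> X) G"
  proof (rule inj_onI)
    fix s t assume "s \<in> G" "t \<in> G" "(proj_pt \<circ> X) s = (proj_pt \<circ> X) t"
    moreover have "X s \<in> proj_pt (X s)" unfolding proj_pt_def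
      by (rule CollectI, rule exI[of _ 1]) simp
    ultimately have "X s \<in> proj_pt (X t)" by simp
    then obtain c where "c \<noteq> 0" "X s = c *s X t" unfolding proj_pt_def by blast
    then have "Kt t (X s)" using scal X by simp
    then show "s = t" using two X by blast
  qed
  have "infinite ((proj_pt \<circ> X) ` G)" using infG injp finite_imageD by blast
  moreover have "(proj_pt \<circ> X) ` G \<subseteq> proj_pt ` sing_pts A1 A2" using sing by auto
  ultimately show ?thesis using finite_subset by blast
qed

end
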